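(* Let $k,n$ be positive integers with $k\leqslant n$ and let $C\in\mathrm{Conf}([n]^k_<)$ be a shelling order. Then its evacuation $\epsilon_D C$ is a shelling order.
   Context: $[n]:=\{1,\ldots,n\}$; $[n]^k_<$ denotes the set of $k$-element subsets of $[n]$. $\mathrm{Conf}([n]^k_<)$ is the set of tuples $C=(C_1,\ldots,C_h)$, $h\geqslant1$, of pairwise distinct elements of $[n]^k_<$. $C$ is a shelling order if for all $i<j$ in $[h]$ there exists $z<j$ with $|C_z\cap C_j|=k-1$ and $C_i\cap C_j\subseteq C_z\cap C_j$. The dual graph $D(C)$ is the graph on $[h]$ with $\{i,j\}$ an edge iff $|C_i\cap C_j|=k-1$. For a graph $G$ on $[h]$, its track $T_G=\{v_1,\ldots,v_r\}$ is defined by $v_1=1$ and, for $i\geqslant2$, $v_i=\min\{j\in[h]: j>v_{i-1},\ \{v_{i-1},j\}\text{ an edge}\}$ if this exists, otherwise $r=i-1$. The promotion $\partial_G\in S_h$ is given by $\partial_G(i)=i-1$ for $i\notin T_G$, $\partial_G(v_j)=v_{j+1}-1$ for $j\in[r-1]$, $\partial_G(v_r)=h$. For $\sigma\in S_h$, $\sigma C:=(C_{\sigma^{-1}(1)},\ldots,C_{\sigma^{-1}(h)})$, and $\partial_D C:=\partial_{D(C)}C$. For $r\in[h]$, the $r$-promotion is $\partial_{r,D}C:=(\partial_D(C_1,\ldots,C_r),C_{r+1},\ldots,C_h)$, i.e. promotion applied to the prefix of length $r$ followed by the unchanged remaining entries. The evacuation is $\epsilon_D C:=(\partial_{2,D}\circ\cdots\circ\partial_{h-1,D}\circ\partial_{h,D})(C)$.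 *)

theory Defs
  imports Main
begin

(* Configurations are lists of k-subsets of [n]; the paper's C_i (1-based) is C ! (i - 1). *)

definition kset :: "nat \<Rightarrow> nat \<Rightarrow> nat set set" where
  "kset n k = {A. A \<subseteq> {1..n} \<and> card A = k}"

definition Conf :: "nat \<Rightarrow> nat \<Rightarrow> nat set list set" where
  "Conf n k = {C. length C \<ge> 1 \<and> distinct C \<and> set C \<subseteq> kset n k}"

definition ent :: "'a list \<Rightarrow> nat \<Rightarrow> 'a" where
  "ent C i = C ! (i - 1)"

definition shelling :: "nat \<Rightarrow> nat set list \<Rightarrow> bool" where
  "shelling k C \<longleftrightarrow>
     (\<forall>i j. 1 \<le> i \<and> i < j \<and> j \<le> length C \<longrightarrow>
        (\<exists>z. 1 \<le> z \<and> z < j \<and> card (ent C z \<inter> ent C j) = k - 1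
              \<and> ent C i \<inter> ent C j \<subseteq> ent C z \<inter> ent C j))"

definition dual :: "nat \<Rightarrow> nat set list \<Rightarrow> nat \<Rightarrow> nat \<Rightarrow> bool" where
  "dual k C i j \<longleftrightarrow> 1 \<le> i \<and> i \<le> length C \<and> 1 \<le> j \<and> j \<le> length C \<and> i \<noteq> j
      \<and> card (ent C i \<inter> ent C j) = k - 1"

function trk :: "(nat \<Rightarrow> nat \<Rightarrow> bool) \<Rightarrow> nat \<Rightarrow> nat \<Rightarrow> nat list" where
  "trk G h v = (let S = {j. v < j \<and> j \<le> h \<and> G v j} in
                 if S = {} then [v] else v # trk G h (Min S))"
  by pat_completeness auto
termination
proof (relation "measure (\<lambda>(G, h, v). h - v)")
  fix G :: "nat \<Rightarrow> nat \<Rightarrow> bool" and h v :: nat and S :: "nat set"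
  assume S: "S = {j. v < j \<and> j \<le> h \<and> G v j}" "S \<noteq> {}"
  have fin: "finite S" unfolding S(1) by (rule finite_subset[of _ "{..h}"]) (auto simp: finite_atMost)
  have "Min S \<in> S" using fin S(2) by (rule Min_in)
  then show "((G, h, Min S), G, h, v) \<in> measure (\<lambda>(G, h, v). h - v)"
    using S(1) by auto
qed auto

definition track :: "(nat \<Rightarrow> nat \<Rightarrow> bool) \<Rightarrow> nat \<Rightarrow> nat list" where
  "track G h = trk G h 1"

(* promotion permutation \<partial>_G in S_h (track is strictly increasing, so indices are unique) *)
definition promperm :: "(nat \<Rightarrow> nat \<Rightarrow> bool) \<Rightarrow> nat \<Rightarrow> nat \<Rightarrow> nat" where
  "promperm G h i =
     (let T = track G h in
      if i \<notin> set T then i - 1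
      else if i = last T then h
      else T ! (Suc (LEAST j. T ! j = i)) - 1)"

(* \<sigma>C = (C_{\<sigma>^{-1}(1)}, ..., C_{\<sigma>^{-1}(h)}) *)
definition permute :: "(nat \<Rightarrow> nat) \<Rightarrow> 'a list \<Rightarrow> 'a list" where
  "permute \<sigma> C = map (\<lambda>m. ent C (THE i. 1 \<le> i \<and> i \<le> length C \<and> \<sigma> i = m)) [1..<length C + 1]"

definition promD :: "nat \<Rightarrow> nat set list \<Rightarrow> nat set list" where
  "promD k C = permute (promperm (dual k C) (length C)) C"

definition rpromD :: "nat \<Rightarrow> nat \<Rightarrow> nat set list \<Rightarrow> nat set list" where
  "rpromD k r C = promD k (take r C) @ drop r C"

(* evacuation: \<partial>_{2} \<circ> ... \<circ> \<partial>_{h-1} \<circ> \<partial>_{h}, applying \<partial>_h first *)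
definition evacD :: "nat \<Rightarrow> nat set list \<Rightarrow> nat set list" where
  "evacD k C = foldl (\<lambda>D r. rpromD k r D) C (rev [2..<length C + 1])"

end

theory Submission
  imports Defs
begin

declare trk.simps[simp del]

definition nbr :: "(nat \<Rightarrow> nat \<Rightarrow> bool) \<Rightarrow> nat \<Rightarrow> nat \<Rightarrow> nat set" where
  "nbr G h x = {j. x < j \<and> j \<le> h \<and> G x j}"

lemma nbr_fin: "finite (nbr G h x)"
  unfolding nbr_def by (rule finite_subset[of _ "{..h}"]) auto

lemma nbr_Min: "nbr G h x \<noteq> {} \<Longrightarrow> Min (nbr G h x) \<in> nbr G h x"
  using nbr_fin Min_in by blast

lemma nbr_Min_le: "y \<in> nbr G h x \<Longrightarrow> Min (nbr G h x) \<le> y"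
  using nbr_fin Min_le by blast

lemma trk_eq: "trk G h v = (if nbr G h v = {} then [v] else v # trk G h (Min (nbr G h v)))"
  by (subst trk.simps) (simp only: nbr_def Let_def)

lemma trk_props:
  "(x \<in> set (trk G h v) \<longrightarrow> x = v \<or> (v < x \<and> x \<le> h))
   \<and> (x \<in> set (trk G h v) \<longrightarrow> nbr G h x \<noteq> {} \<longrightarrow>
        Min (nbr G h x) \<in> set (trk G h v) \<and>
        (\<exists>idx. Suc idx < length (trk G h v) \<and> trk G h v ! idx = x \<and> trk G h v ! Suc idx = Min (nbr G h x)))
   \<and> (x \<in> set (trk G h v) \<longrightarrow> nbr G h x = {} \<longrightarrow> x = last (trk G h v))
   \<and> (x \<in> set (trk G h v) \<longrightarrow> y \<in> set (trk G h v) \<longrightarrow> x < y \<longrightarrow> nbr G h x \<noteq> {} \<and> Min (nbr G h x) \<le> y)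
   \<and> sorted_wrt (<) (trk G h v)"
proof (induction G h v arbitrary: x y rule: trk.induct)
  case (1 G h v)
  show ?case
  proof (cases "nbr G h v = {}")
    case True
    then show ?thesis by (subst (1 2 3 4 5 6 7 8 9 10 11) trk_eq) auto
  next
    case False
    define w where "w = Min (nbr G h v)"
    have w: "w \<in> nbr G h v" using False nbr_Min w_def by blast
    then have vw: "v < w" "w \<le> h" by (auto simp: nbr_def)
    have IH: "\<And>x y. (x \<in> set (trk G h w) \<longrightarrow> x = w \<or> (w < x \<and> x \<le> h))
   \<and> (x \<in> set (trk G h w) \<longrightarrow> nbr G h x \<noteq> {} \<longrightarrow>
        Min (nbr G h x) \<in> set (trk G h w) \<and>
        (\<exists>idx. Suc idx < length (trk G h w) \<and> trk G h w ! idx = x \<and> trk G h w ! Suc idx = Min (nbr G h x)))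
   \<and> (x \<in> set (trk G h w) \<longrightarrow> nbr G h x = {} \<longrightarrow> x = last (trk G h w))
   \<and> (x \<in> set (trk G h w) \<longrightarrow> y \<in> set (trk G h w) \<longrightarrow> x < y \<longrightarrow> nbr G h x \<noteq> {} \<and> Min (nbr G h x) \<le> y)
   \<and> sorted_wrt (<) (trk G h w)"
      using "1.IH"[of "nbr G h v"] False unfolding w_def nbr_def by blast
    have T: "trk G h v = v # trk G h w" using False by (subst trk_eq) (simp add: w_def)
    have ne: "trk G h w \<noteq> []" by (subst trk_eq) auto
    have hdw: "trk G h w ! 0 = w" by (subst trk_eq) auto
    have ge: "\<And>z. z \<in> set (trk G h w) \<Longrightarrow> w \<le> z" using IH by fastforce
    show ?thesis
    proof (intro conjI impI)
      show "x = v \<or> v < x \<and> x \<le> h" if "x \<in> set (trk G h v)"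
        using that T IH[of x x] vw by auto
    next
      assume x: "x \<in> set (trk G h v)" and nx: "nbr G h x \<noteq> {}"
      show "Min (nbr G h x) \<in> set (trk G h v)"
      proof (cases "x = v")
        case True then show ?thesis using T hdw ne w_def
          by (metis list.set_intros(2) nth_mem length_greater_0_conv)
      next
        case False then show ?thesis using T x IH[of x] nx by auto
      qed
      show "\<exists>idx. Suc idx < length (trk G h v) \<and> trk G h v ! idx = x \<and> trk G h v ! Suc idx = Min (nbr G h x)"
      proof (cases "x = v")
        case True then show ?thesis using T hdw ne w_def
          by (intro exI[of _ 0]) auto
      next
        case False
        then have "x \<in> set (trk G h w)" using T x by auto
        then obtain idx where "Suc idx < length (trk G h w) \<and> trk G h w ! idx = x \<and> trk G h w ! Suc idx = Min (nbr G h x)"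
          using IH[of x] nx by blast
        then show ?thesis using T by (intro exI[of _ "Suc idx"]) auto
      qed
    next
      assume x: "x \<in> set (trk G h v)" and nx: "nbr G h x = {}"
      then have "x \<noteq> v" using False by auto
      then have "x \<in> set (trk G h w)" using T x by auto
      then show "x = last (trk G h v)" using IH[of x] nx T ne by auto
    next
      assume x: "x \<in> set (trk G h v)" and y: "y \<in> set (trk G h v)" and xy: "x < y"
      have yw: "y \<in> set (trk G h w)" using y xy T IH[of x] x vw by auto
      show "nbr G h x \<noteq> {}"
      proof (cases "x = v")
        case True then show ?thesis using False by auto
      next
        case False then show ?thesis using T x yw xy IH[of x y] by auto
      qed
      show "Min (nbr G h x) \<le> y"
      proof (cases "x = v")
        case True then show ?thesis using ge[OF yw] w_def by auto
      next
        case False then show ?thesis using T x yw xy IH[of x y] by auto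
      qed
    next
      show "sorted_wrt (<) (trk G h v)" using T IH ge vw by fastforce
    qed
  qed
qed


lemma tr_range: "x \<in> set (track G h) \<Longrightarrow> 1 \<le> h \<Longrightarrow> 1 \<le> x \<and> x \<le> h"
  using trk_props[of x G h 1 x] unfolding track_def by auto

lemma tr_one: "1 \<in> set (track G h)"
  unfolding track_def by (subst trk_eq) auto

lemma tr_order: "x \<in> set (track G h) \<Longrightarrow> y \<in> set (track G h) \<Longrightarrow> x < y \<Longrightarrow>
   nbr G h x \<noteq> {} \<and> Min (nbr G h x) \<le> y"
  using trk_props[of x G h 1 y] unfolding track_def by blast

lemma pp_non: "x \<notin> set (track G h) \<Longrightarrow> promperm G h x = x - 1"
  unfolding promperm_def by (simp add: Let_def)

lemma pp_last: assumes "x \<in> set (track G h)" "nbr G h x = {}" shows "promperm G h x = h"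
proof -
  have "x = last (track G h)" using trk_props[of x G h 1] assms unfolding track_def by blast
  then show ?thesis using assms unfolding promperm_def by (simp add: Let_def)
qed

lemma pp_track: assumes "x \<in> set (track G h)" "nbr G h x \<noteq> {}"
  shows "promperm G h x = Min (nbr G h x) - 1 \<and> Min (nbr G h x) \<in> set (track G h)"
proof -
  let ?T = "track G h"
  have mem: "Min (nbr G h x) \<in> set ?T" and
    "\<exists>idx. Suc idx < length ?T \<and> ?T ! idx = x \<and> ?T ! Suc idx = Min (nbr G h x)"
    and srt: "sorted_wrt (<) ?T"
    using trk_props[of x G h 1] assms unfolding track_def by blast+
  then obtain idx where idx: "Suc idx < length ?T" "?T ! idx = x" "?T ! Suc idx = Min (nbr G h x)" by blast
  have "x < last ?T"
  proof -
    have "last ?T = ?T ! (length ?T - 1)" using idx(1) by (intro last_conv_nth) auto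
    moreover have "?T ! idx < ?T ! (length ?T - 1)"
      using sorted_wrt_nth_less[OF srt, of idx "length ?T - 1"] idx(1) by simp
    ultimately show ?thesis using idx(2) by simp
  qed
  then have nl: "x \<noteq> last ?T" by simp
  have L: "(LEAST j. ?T ! j = x) = idx"
  proof (rule Least_equality)
    show "?T ! idx = x" by (rule idx(2))
  next
    fix j assume j: "?T ! j = x"
    show "idx \<le> j"
    proof (rule ccontr)
      assume "\<not> idx \<le> j"
      then have "j < idx" by simp
      then have "?T ! j < ?T ! idx" using sorted_wrt_nth_less[OF srt, of j idx] idx(1) by simp
      then show False using j idx(2) by simp
    qed
  qed
  show ?thesis using assms(1) nl L idx mem unfolding promperm_def by (simp add: Let_def)
qed


definition PS :: "nat \<Rightarrow> nat set list \<Rightarrow> (nat \<Rightarrow> nat) \<Rightarrow> nat \<Rightarrow> bool" where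
  "PS k C \<sigma> h \<longleftrightarrow> (\<forall>i m. 1 \<le> i \<and> i \<le> h \<and> 1 \<le> m \<and> m \<le> h \<and> \<sigma> i < \<sigma> m \<longrightarrow>
     (\<exists>z. 1 \<le> z \<and> z \<le> h \<and> \<sigma> z < \<sigma> m \<and> card (ent C z \<inter> ent C m) = k - 1
          \<and> ent C i \<inter> ent C m \<subseteq> ent C z \<inter> ent C m))"

lemma shD: "shelling k C \<Longrightarrow> 1 \<le> i \<Longrightarrow> i < j \<Longrightarrow> j \<le> length C \<Longrightarrow>
  \<exists>z. 1 \<le> z \<and> z < j \<and> card (ent C z \<inter> ent C j) = k - 1
              \<and> ent C i \<inter> ent C j \<subseteq> ent C z \<inter> ent C j"
  unfolding shelling_def by blast

lemma shelling_L:
  assumes sh: "shelling k C" and v: "1 \<le> v" "v < i" "i \<le> length C"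
    and no: "\<forall>a. v < a \<and> a \<le> i \<longrightarrow> card (ent C v \<inter> ent C a) \<noteq> k - 1"
  shows "\<exists>z. 1 \<le> z \<and> z < v \<and> card (ent C z \<inter> ent C v) = k - 1 \<and> ent C i \<inter> ent C v \<subseteq> ent C z"
proof (cases "\<exists>M. 1 \<le> M \<and> M < v \<and> ent C i \<inter> ent C v \<subseteq> ent C M")
  case True
  then obtain M where M: "1 \<le> M" "M < v" "ent C i \<inter> ent C v \<subseteq> ent C M" by blast
  then obtain z where "1 \<le> z \<and> z < v \<and> card (ent C z \<inter> ent C v) = k - 1
              \<and> ent C M \<inter> ent C v \<subseteq> ent C z \<inter> ent C v"
    using shD[OF sh M(1), of v] v by auto
  then show ?thesis using M by blast
next
  case False
  let ?F = "ent C i \<inter> ent C v"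
  define a where "a = (LEAST a. v < a \<and> a \<le> i \<and> ?F \<subseteq> ent C a)"
  have ex: "v < i \<and> i \<le> i \<and> ?F \<subseteq> ent C i" using v by auto
  have a: "v < a \<and> a \<le> i \<and> ?F \<subseteq> ent C a" unfolding a_def by (rule LeastI[of "\<lambda>a. v < a \<and> a \<le> i \<and> ?F \<subseteq> ent C a" i]) (use ex in blast)
  have amin: "\<And>b. v < b \<and> b \<le> i \<and> ?F \<subseteq> ent C b \<Longrightarrow> a \<le> b" unfolding a_def by (rule Least_le)
  obtain z where z: "1 \<le> z" "z < a" "card (ent C z \<inter> ent C a) = k - 1"
    "ent C v \<inter> ent C a \<subseteq> ent C z \<inter> ent C a"
    using shD[OF sh v(1), of a] v a by auto
  have Fz: "?F \<subseteq> ent C z" using z(4) a by blast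
  have "\<not> z < v" using False z(1) Fz by blast
  moreover have "z \<noteq> v" using z(3) no a by (metis inf_commute)
  moreover have "\<not> (v < z)" using amin[of z] z a Fz by fastforce
  ultimately show ?thesis by simp
qed

lemma permute_ent:
  assumes into: "\<forall>i\<in>{1..h}. \<sigma> i \<in> {1..h}" and inj: "inj_on \<sigma> {1..h}" and len: "length C = h"
  shows "length (permute \<sigma> C) = h \<and> (\<forall>i\<in>{1..h}. ent (permute \<sigma> C) (\<sigma> i) = ent C i)"
proof (intro conjI ballI)
  show "length (permute \<sigma> C) = h" using len unfolding permute_def by simp
next
  fix i assume i: "i \<in> {1..h}"
  have s: "\<sigma> i \<in> {1..h}" using into i by blast
  have th: "(THE j. 1 \<le> j \<and> j \<le> length C \<and> \<sigma> j = \<sigma> i) = i"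
  proof (rule the_equality)
    show "1 \<le> i \<and> i \<le> length C \<and> \<sigma> i = \<sigma> i" using i len by simp
  next
    fix j assume j: "1 \<le> j \<and> j \<le> length C \<and> \<sigma> j = \<sigma> i"
    then have "j \<in> {1..h}" using len by simp
    then show "j = i" using inj_onD[OF inj, of j i] i j by blast
  qed
  have "[1..<length C + 1] ! (\<sigma> i - 1) = \<sigma> i" using s len by (simp del: upt_Suc add: nth_upt)
  then show "ent (permute \<sigma> C) (\<sigma> i) = ent C i"
  proof -
    have "\<sigma> i - 1 < h" using s by auto
    then have "\<sigma> i - 1 < length [1..<length C + 1]" using len by simp
    then show ?thesis
      using s len th \<open>[1..<length C + 1] ! (\<sigma> i - 1) = \<sigma> i\<close>
      unfolding permute_def ent_def by (simp del: upt_Suc)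
  qed
qed

lemma shelling_G:
  assumes len: "length L = h" and into: "\<forall>i\<in>{1..h}. \<sigma> i \<in> {1..h}" and inj: "inj_on \<sigma> {1..h}"
    and e: "\<forall>i\<in>{1..h}. ent L (\<sigma> i) = ent C i" and ps: "PS k C \<sigma> h"
  shows "shelling k L"
  unfolding shelling_def
proof (intro allI impI)
  fix p q assume pq: "1 \<le> p \<and> p < q \<and> q \<le> length L"
  have img: "\<sigma> ` {1..h} = {1..h}"
  proof (rule card_subset_eq)
    show "finite {1..h}" by simp
    show "\<sigma> ` {1..h} \<subseteq> {1..h}" using into by blast
    show "card (\<sigma> ` {1..h}) = card {1..h}" using inj by (rule card_image)
  qed
  obtain i where i: "i \<in> {1..h}" "\<sigma> i = p" proof -
    have "p \<in> \<sigma> ` {1..h}" using pq len img by auto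
    then show ?thesis using that by blast
  qed
  obtain m where m: "m \<in> {1..h}" "\<sigma> m = q" proof -
    have "q \<in> \<sigma> ` {1..h}" using pq len img by auto
    then show ?thesis using that by blast
  qed
  obtain z where z: "1 \<le> z \<and> z \<le> h \<and> \<sigma> z < \<sigma> m \<and> card (ent C z \<inter> ent C m) = k - 1
          \<and> ent C i \<inter> ent C m \<subseteq> ent C z \<inter> ent C m"
    using ps i m pq unfolding PS_def by force
  have "\<sigma> z \<in> {1..h}" using into z by auto
  then show "\<exists>z. 1 \<le> z \<and> z < q \<and> card (ent L z \<inter> ent L q) = k - 1 \<and> ent L p \<inter> ent L q \<subseteq> ent L z \<inter> ent L q"
    using z e i m by (intro exI[of _ "\<sigma> z"]) auto
qed


lemma main_prom:
  assumes sh: "shelling k C" and h: "length C = h" "1 \<le> h"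
  shows "(\<forall>i\<in>{1..h}. promperm (dual k C) h i \<in> {1..h}) \<and> inj_on (promperm (dual k C) h) {1..h}
         \<and> PS k C (promperm (dual k C) h) h"
proof -
  define G where "G = dual k C"
  define \<sigma> where "\<sigma> = promperm G h"
  define T where "T = set (track G h)"
  define N where "N x = nbr G h x" for x
  have Nmem: "j \<in> N x \<longleftrightarrow> x < j \<and> j \<le> h \<and> G x j" for j x unfolding N_def nbr_def by simp
  have Nmin: "N x \<noteq> {} \<Longrightarrow> Min (N x) \<in> N x" for x unfolding N_def by (rule nbr_Min)
  have Nle: "j \<in> N x \<Longrightarrow> Min (N x) \<le> j" for j x unfolding N_def by (rule nbr_Min_le)
  have Trange: "x \<in> T \<Longrightarrow> 1 \<le> x \<and> x \<le> h" for x unfolding T_def using tr_range h(2) by blast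
  have T1: "1 \<in> T" unfolding T_def by (rule tr_one)
  have Tord: "x \<in> T \<Longrightarrow> y \<in> T \<Longrightarrow> x < y \<Longrightarrow> N x \<noteq> {} \<and> Min (N x) \<le> y" for x y
    unfolding T_def N_def by (rule tr_order)
  have sNon: "x \<notin> T \<Longrightarrow> \<sigma> x = x - 1" for x unfolding \<sigma>_def T_def by (rule pp_non)
  have sLast: "x \<in> T \<Longrightarrow> N x = {} \<Longrightarrow> \<sigma> x = h" for x unfolding \<sigma>_def T_def N_def by (rule pp_last)
  have sTr: "x \<in> T \<Longrightarrow> N x \<noteq> {} \<Longrightarrow> \<sigma> x = Min (N x) - 1 \<and> Min (N x) \<in> T" for x
    unfolding \<sigma>_def T_def N_def by (rule pp_track)
  have sT: "x \<in> T \<Longrightarrow> x \<le> \<sigma> x \<and> \<sigma> x \<le> h" for x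
  proof -
    assume x: "x \<in> T"
    show ?thesis
    proof (cases "N x = {}")
      case True then show ?thesis using sLast x Trange by auto
    next
      case False
      then have "Min (N x) \<in> N x" by (rule Nmin)
      then have "x < Min (N x) \<and> Min (N x) \<le> h" using Nmem by blast
      then show ?thesis using sTr[OF x False] by auto
    qed
  qed
  have sN: "x \<notin> T \<Longrightarrow> 1 \<le> x \<Longrightarrow> \<sigma> x = x - 1 \<and> 2 \<le> x" for x
    using sNon T1 by (cases "x = 1") auto
  have into: "\<forall>i\<in>{1..h}. \<sigma> i \<in> {1..h}"
  proof
    fix i assume i: "i \<in> {1..h}"
    show "\<sigma> i \<in> {1..h}"
    proof (cases "i \<in> T")
      case True then show ?thesis using sT Trange by fastforce
    next
      case False then show ?thesis using sN[OF False] i by auto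
    qed
  qed
  have inj: "inj_on \<sigma> {1..h}"
  proof (rule inj_onI)
    fix x y assume x: "x \<in> {1..h}" and y: "y \<in> {1..h}" and e: "\<sigma> x = \<sigma> y"
    have key: "x = y" if x: "x \<in> {1..h}" and y: "y \<in> {1..h}" and e: "\<sigma> x = \<sigma> y"
       and c: "x \<notin> T \<or> (x \<in> T \<and> y \<in> T \<and> x \<le> y)" for x y
    proof (cases "x \<in> T")
      case False
      show ?thesis
      proof (cases "y \<in> T")
        case False then show ?thesis using sN \<open>x \<notin> T\<close> x y e by fastforce
      next
        case True
        show ?thesis
        proof (cases "N y = {}")
          case True then show ?thesis using sLast[OF \<open>y \<in> T\<close>] sN[OF \<open>x \<notin> T\<close>] x e by auto
        next
          case False
          then have "\<sigma> y = Min (N y) - 1" "Min (N y) \<in> T" using sTr \<open>y \<in> T\<close> by auto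
          moreover have "Min (N y) \<ge> 1" using Trange \<open>Min (N y) \<in> T\<close> by blast
          ultimately have "Min (N y) = x" using sN[OF \<open>x \<notin> T\<close>] x e by auto
          then show ?thesis using \<open>x \<notin> T\<close> \<open>Min (N y) \<in> T\<close> by simp
        qed
      qed
    next
      case True
      with c have yT: "y \<in> T" and xy: "x \<le> y" by auto
      show ?thesis
      proof (rule ccontr)
        assume "x \<noteq> y"
        then have "x < y" using xy by simp
        then have nx: "N x \<noteq> {}" and mle: "Min (N x) \<le> y" using Tord True yT by blast+
        have sx: "\<sigma> x = Min (N x) - 1" using sTr[OF True nx] by blast
        have "Min (N x) \<in> N x" using Nmin nx by blast
        then have "x < Min (N x)" using Nmem by blast
        then have "\<sigma> x < y" using sx mle by linarith
        then show False using sT[OF yT] e by linarith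
      qed
    qed
    show "x = y"
    proof (cases "x \<in> T \<and> y \<in> T")
      case True
      then show ?thesis using key[OF x y e] key[OF y x e[symmetric]] by (cases "x \<le> y") auto
    next
      case False
      then show ?thesis using key[OF x y e] key[OF y x e[symmetric]] by blast
    qed
  qed
  have Z: "\<sigma> z < \<sigma> m" if z: "1 \<le> z" "z < m" "m \<le> h" "card (ent C z \<inter> ent C m) = k - 1" for z m
  proof -
    have "G z m" unfolding G_def dual_def using z h by auto
    then have mN: "m \<in> N z" using Nmem z by blast
    then have nz: "N z \<noteq> {}" by blast
    have mz: "Min (N z) \<le> m" using Nle mN by blast
    have zm: "z < Min (N z)" using Nmin[OF nz] Nmem by blast
    show ?thesis
    proof (cases "z \<in> T")
      case False
      then have "\<sigma> z = z - 1" using sNon by blast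
      moreover have "m - 1 \<le> \<sigma> m" using sT sNon by (cases "m \<in> T") force+
      ultimately show ?thesis using z by linarith
    next
      case True
      then have sz: "\<sigma> z = Min (N z) - 1" and mT: "Min (N z) \<in> T" using sTr nz by blast+
      show ?thesis
      proof (cases "m \<in> T")
        case True then show ?thesis using sT[OF True] sz mz zm by linarith
      next
        case False
        then have "Min (N z) \<noteq> m" using mT by blast
        then show ?thesis using sNon[OF False] sz mz zm by linarith
      qed
    qed
  qed
  have PS: "PS k C \<sigma> h"
    unfolding PS_def
  proof (intro allI impI)
    fix i m assume im: "1 \<le> i \<and> i \<le> h \<and> 1 \<le> m \<and> m \<le> h \<and> \<sigma> i < \<sigma> m"
    have fromlt: "\<exists>z. 1 \<le> z \<and> z \<le> h \<and> \<sigma> z < \<sigma> m \<and> card (ent C z \<inter> ent C m) = k - 1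
          \<and> ent C i \<inter> ent C m \<subseteq> ent C z \<inter> ent C m" if lt: "i < m"
    proof -
      obtain z where z: "1 \<le> z" "z < m" "card (ent C z \<inter> ent C m) = k - 1"
          "ent C i \<inter> ent C m \<subseteq> ent C z \<inter> ent C m"
        using shD[OF sh, of i m] im lt h by auto
      then show ?thesis using Z[OF z(1) z(2) _ z(3)] im by (intro exI[of _ z]) auto
    qed
    show "\<exists>z. 1 \<le> z \<and> z \<le> h \<and> \<sigma> z < \<sigma> m \<and> card (ent C z \<inter> ent C m) = k - 1
          \<and> ent C i \<inter> ent C m \<subseteq> ent C z \<inter> ent C m"
    proof (cases "m \<in> T")
      case False
      then have sm: "\<sigma> m = m - 1" using sNon by blast
      have "i < m"
      proof (cases "i \<in> T")
        case True then show ?thesis using sT[OF True] sm im by linarith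
      next
        case False then show ?thesis using sN[OF False] sm im by linarith
      qed
      then show ?thesis by (rule fromlt)
    next
      case mT: True
      consider "i < m" | "i = m" | "m < i" by linarith
      then show ?thesis
      proof cases
        case 1 then show ?thesis by (rule fromlt)
      next
        case 2 then show ?thesis using im by simp
      next
        case 3
        have no: "\<forall>a. m < a \<and> a \<le> i \<longrightarrow> card (ent C m \<inter> ent C a) \<noteq> k - 1"
        proof (intro allI impI notI)
          fix a assume a: "m < a \<and> a \<le> i" and c: "card (ent C m \<inter> ent C a) = k - 1"
          have "G m a" unfolding G_def dual_def using a c im h by auto
          then have aN: "a \<in> N m" using Nmem a im by auto
          then have nm: "N m \<noteq> {}" by blast
          have sm: "\<sigma> m = Min (N m) - 1" using sTr[OF mT nm] by blast
          have ma: "Min (N m) \<le> a" using Nle aN by blast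
          have mm: "m < Min (N m)" using Nmin[OF nm] Nmem by blast
          show False
          proof (cases "i \<in> T")
            case True
            then have "Min (N m) \<le> i" using Tord mT 3 by blast
            then show False using sT[OF True] sm im mm by linarith
          next
            case False
            then show False using sN[OF False] sm im ma a mm by linarith
          qed
        qed
        obtain z where z: "1 \<le> z" "z < m" "card (ent C z \<inter> ent C m) = k - 1"
          "ent C i \<inter> ent C m \<subseteq> ent C z"
          using shelling_L[OF sh, of m i] im 3 h no by auto
        then show ?thesis using Z[OF z(1) z(2) _ z(3)] im by (intro exI[of _ z]) auto
      qed
    qed
  qed
  show ?thesis using into inj PS unfolding \<sigma>_def G_def by blast
qed


lemma ent_take: "i \<le> r \<Longrightarrow> 1 \<le> i \<Longrightarrow> ent (take r D) i = ent D i"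
  unfolding ent_def by simp

lemma shelling_take: assumes "shelling k D" shows "shelling k (take r D)"
  unfolding shelling_def
proof (intro allI impI)
  fix i j assume ij: "1 \<le> i \<and> i < j \<and> j \<le> length (take r D)"
  then have jr: "j \<le> r" "j \<le> length D" by auto
  obtain z where z: "1 \<le> z" "z < j" "card (ent D z \<inter> ent D j) = k - 1"
    "ent D i \<inter> ent D j \<subseteq> ent D z \<inter> ent D j" using shD[OF assms, of i j] ij jr by auto
  show "\<exists>z. 1 \<le> z \<and> z < j \<and> card (ent (take r D) z \<inter> ent (take r D) j) = k - 1 \<and>
             ent (take r D) i \<inter> ent (take r D) j \<subseteq> ent (take r D) z \<inter> ent (take r D) j"
    using z ij jr ent_take[of z r D] ent_take[of i r D] ent_take[of j r D]
    by (intro exI[of _ z]) auto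
qed

lemma rprom:
  assumes sh: "shelling k D" and r: "1 \<le> r" "r \<le> length D"
  shows "shelling k (rpromD k r D) \<and> length (rpromD k r D) = length D"
proof -
  define P where "P = take r D"
  define h where "h = length D"
  define \<sigma> where "\<sigma> = promperm (dual k P) r"
  have lP: "length P = r" using r unfolding P_def by simp
  have shP: "shelling k P" unfolding P_def by (rule shelling_take[OF sh])
  have M: "(\<forall>i\<in>{1..r}. \<sigma> i \<in> {1..r}) \<and> inj_on \<sigma> {1..r} \<and> PS k P \<sigma> r"
    unfolding \<sigma>_def using main_prom[OF shP lP r(1)] .
  then have into: "\<forall>i\<in>{1..r}. \<sigma> i \<in> {1..r}" and inj: "inj_on \<sigma> {1..r}" and ps: "PS k P \<sigma> r" by auto
  have pe: "length (promD k P) = r \<and> (\<forall>i\<in>{1..r}. ent (promD k P) (\<sigma> i) = ent P i)"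
    unfolding promD_def \<sigma>_def[symmetric] lP using permute_ent[OF into inj lP] lP by simp
  define L where "L = promD k P @ drop r D"
  have LL: "rpromD k r D = L" unfolding L_def rpromD_def P_def by simp
  have lL: "length L = h" unfolding L_def h_def using pe r by simp
  define \<tau> where "\<tau> i = (if i \<le> r then \<sigma> i else i)" for i
  have into': "\<forall>i\<in>{1..h}. \<tau> i \<in> {1..h}" using into r unfolding \<tau>_def h_def by fastforce
  have inj': "inj_on \<tau> {1..h}"
  proof (rule inj_onI)
    fix x y assume x: "x \<in> {1..h}" and y: "y \<in> {1..h}" and e: "\<tau> x = \<tau> y"
    show "x = y"
    proof (cases "x \<le> r"; cases "y \<le> r")
      assume "x \<le> r" "y \<le> r" then show ?thesis using inj_onD[OF inj] e x y unfolding \<tau>_def by auto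
    next
      assume "x \<le> r" "\<not> y \<le> r" then show ?thesis using into e x unfolding \<tau>_def by fastforce
    next
      assume "\<not> x \<le> r" "y \<le> r" then show ?thesis using into e y unfolding \<tau>_def by fastforce
    next
      assume "\<not> x \<le> r" "\<not> y \<le> r" then show ?thesis using e unfolding \<tau>_def by auto
    qed
  qed
  have e': "\<forall>i\<in>{1..h}. ent L (\<tau> i) = ent D i"
  proof
    fix i assume i: "i \<in> {1..h}"
    show "ent L (\<tau> i) = ent D i"
    proof (cases "i \<le> r")
      case True
      then have si: "\<sigma> i \<in> {1..r}" using into i by auto
      have "ent L (\<sigma> i) = ent (promD k P) (\<sigma> i)"
        unfolding L_def ent_def using si pe by (auto simp: nth_append)
      also have "\<dots> = ent P i" using pe True i by auto
      also have "\<dots> = ent D i" unfolding P_def using True i ent_take by auto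
      finally show ?thesis unfolding \<tau>_def using True by simp
    next
      case False
      then have "ent L i = drop r D ! (i - 1 - r)" unfolding L_def ent_def using pe by (auto simp: nth_append)
      also have "\<dots> = ent D i" unfolding ent_def using False i r by (simp add: h_def)
      finally show ?thesis unfolding \<tau>_def using False by simp
    qed
  qed
  have ps': "PS k D \<tau> h"
    unfolding PS_def
  proof (intro allI impI)
    fix i m assume im: "1 \<le> i \<and> i \<le> h \<and> 1 \<le> m \<and> m \<le> h \<and> \<tau> i < \<tau> m"
    show "\<exists>z. 1 \<le> z \<and> z \<le> h \<and> \<tau> z < \<tau> m \<and> card (ent D z \<inter> ent D m) = k - 1
          \<and> ent D i \<inter> ent D m \<subseteq> ent D z \<inter> ent D m"
    proof (cases "m \<le> r")
      case True
      have ir: "i \<le> r"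
      proof (rule ccontr)
        assume "\<not> i \<le> r"
        then have "\<tau> i = i" unfolding \<tau>_def by simp
        moreover have "\<tau> m \<le> r" using into True im unfolding \<tau>_def by auto
        ultimately show False using im \<open>\<not> i \<le> r\<close> by simp
      qed
      obtain z where z: "1 \<le> z" "z \<le> r" "\<sigma> z < \<sigma> m" "card (ent P z \<inter> ent P m) = k - 1"
          "ent P i \<inter> ent P m \<subseteq> ent P z \<inter> ent P m"
        using ps ir True im unfolding PS_def \<tau>_def by force
      then show ?thesis using ent_take[of z r D] ent_take[of m r D] ent_take[of i r D] True ir im r
        unfolding P_def \<tau>_def h_def by (intro exI[of _ z]) auto
    next
      case False
      then have tm: "\<tau> m = m" unfolding \<tau>_def by simp
      have "i < m"
      proof (cases "i \<le> r")
        case True then show ?thesis using False by simp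
      next
        case F2: False then show ?thesis using im tm unfolding \<tau>_def by simp
      qed
      then obtain z where z: "1 \<le> z" "z < m" "card (ent D z \<inter> ent D m) = k - 1"
          "ent D i \<inter> ent D m \<subseteq> ent D z \<inter> ent D m"
        using shD[OF sh, of i m] im h_def by auto
      have "\<tau> z < m"
      proof (cases "z \<le> r")
        case True
        then have "\<sigma> z \<in> {1..r}" using into z(1) by auto
        then show ?thesis using True False unfolding \<tau>_def by auto
      next
        case F2: False then show ?thesis using z unfolding \<tau>_def by simp
      qed
      then show ?thesis using z tm im by (intro exI[of _ z]) auto
    qed
  qed
  have "shelling k L" by (rule shelling_G[OF lL into' inj' e' ps'])
  then show ?thesis using LL lL h_def by simp
qed

lemma evac_fold:
  "shelling k D \<Longrightarrow> length D = h \<Longrightarrow> set rs \<subseteq> {1..h} \<Longrightarrow>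
   shelling k (foldl (\<lambda>D r. rpromD k r D) D rs) \<and> length (foldl (\<lambda>D r. rpromD k r D) D rs) = h"
proof (induction rs arbitrary: D)
  case Nil then show ?case by simp
next
  case (Cons r rs)
  have "shelling k (rpromD k r D) \<and> length (rpromD k r D) = length D"
    using rprom[OF Cons.prems(1), of r] Cons.prems by auto
  then show ?case using Cons.IH[of "rpromD k r D"] Cons.prems by auto
qed

theorem theorem5p11:
  fixes k n :: nat and C :: "nat set list"
  assumes "1 \<le> k" and "k \<le> n"
    and "C \<in> Conf n k"
    and "shelling k C"
  shows "shelling k (evacD k C)"
proof -
  have "set (rev [2..<length C + 1]) \<subseteq> {1..length C}" by auto
  then show ?thesis unfolding evacD_def using evac_fold[OF assms(4) refl] by blast
qed

end
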